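(* Let $\mathbb{K}$ be a field and let $\mathcal{L}=\{L_1,\ldots,L_d\}$ be a configuration of $d$ mutually distinct lines in $\mathbb{P}^2(\mathbb{K})$, with set of singular points $\{P_1,\ldots,P_s\}$ (points lying on at least two lines of $\mathcal{L}$), where $P_i$ has multiplicity $m_i$ (the number of lines of $\mathcal{L}$ through $P_i$), ordered so that $m_1\ge m_2\ge\cdots\ge m_s$. Then $$m_1+\cdots+m_r\le d+\binom{r}{2}\quad\text{for } r=1,\ldots,s.$$ In particular: (a) if $s\ge 3$ then $m_1+m_2+m_3\le d+3$; (b) if $s\ge 4$ then $m_1+m_2+m_3+m_4\le d+6$. *)

theory Defs
  imports Main
begin

type_synonym 'a vec3 = "'a \<times> 'a \<times> 'a"

definition scale3 :: "'a::field \<Rightarrow> 'a vec3 \<Rightarrow> 'a vec3" where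
  "scale3 c v = (c * fst v, c * fst (snd v), c * snd (snd v))"

definition dot3 :: "'a::field vec3 \<Rightarrow> 'a vec3 \<Rightarrow> 'a" where
  "dot3 v w = fst v * fst w + fst (snd v) * fst (snd w) + snd (snd v) * snd (snd w)"

definition pclass :: "'a::field vec3 \<Rightarrow> 'a vec3 set" where
  "pclass v = {scale3 c v | c. c \<noteq> 0}"

text \<open>Points of P^2(K); lines of P^2(K) are likewise classes of nonzero linear forms.\<close>
definition proj_points :: "'a::field vec3 set set" where
  "proj_points = {pclass v | v. v \<noteq> (0, 0, 0)}"

definition proj_lines :: "'a::field vec3 set set" where
  "proj_lines = {pclass w | w. w \<noteq> (0, 0, 0)}"

text \<open>Incidence: point P lies on line L (well defined on classes).\<close>
definition incident :: "'a::field vec3 set \<Rightarrow> 'a vec3 set \<Rightarrow> bool" where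
  "incident P L \<longleftrightarrow> (\<exists>v\<in>P. \<exists>w\<in>L. dot3 v w = 0)"

definition mult :: "'a::field vec3 set set \<Rightarrow> 'a vec3 set \<Rightarrow> nat" where
  "mult Ls P = card {L \<in> Ls. incident P L}"

definition singular_points :: "'a::field vec3 set set \<Rightarrow> 'a vec3 set set" where
  "singular_points Ls = {P \<in> proj_points. mult Ls P \<ge> 2}"

end

theory Submission
  imports Defs
begin

definition cross3 :: "'a::field vec3 \<Rightarrow> 'a vec3 \<Rightarrow> 'a vec3" where
  "cross3 a b = (fst (snd a) * snd (snd b) - snd (snd a) * fst (snd b),
                 snd (snd a) * fst b - fst a * snd (snd b),
                 fst a * fst (snd b) - fst (snd a) * fst b)"

lemma cross_zero_prop:
  fixes a b :: "'a::field vec3"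
  assumes "a \<noteq> (0,0,0)" "cross3 a b = (0,0,0)"
  shows "\<exists>c. b = scale3 c a"
proof -
  obtain a1 a2 a3 where a: "a = (a1,a2,a3)" by (cases a) auto
  obtain b1 b2 b3 where b: "b = (b1,b2,b3)" by (cases b) auto
  have e1: "a2*b3 = a3*b2" and e2: "a3*b1 = a1*b3" and e3: "a1*b2 = a2*b1"
    using assms(2) by (auto simp: cross3_def a b)
  show ?thesis
  proof (cases "a1 = 0")
    case False
    have "b = scale3 (b1/a1) a" using False e2 e3
      by (simp add: scale3_def a b field_simps)
    then show ?thesis by blast
  next
    case z1: True
    show ?thesis
    proof (cases "a2 = 0")
      case False
      have "b = scale3 (b2/a2) a" using False e1 e3 z1
        by (simp add: scale3_def a b field_simps)
      then show ?thesis by blast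
    next
      case True
      then have "a3 \<noteq> 0" using z1 assms(1) a by auto
      have "b = scale3 (b3/a3) a" using \<open>a3 \<noteq> 0\<close> e1 e2 z1 True
        by (simp add: scale3_def a b field_simps)
      then show ?thesis by blast
    qed
  qed
qed

lemma cross_orth:
  fixes v v' w :: "'a::field vec3"
  assumes "dot3 v w = 0" "dot3 v' w = 0"
  shows "cross3 w (cross3 v v') = (0,0,0)"
proof -
  obtain a1 a2 a3 where a: "v = (a1,a2,a3)" by (cases v) auto
  obtain b1 b2 b3 where b: "v' = (b1,b2,b3)" by (cases v') auto
  obtain c1 c2 c3 where c: "w = (c1,c2,c3)" by (cases w) auto
  have h1: "a1*c1 + a2*c2 + a3*c3 = 0" and h2: "b1*c1 + b2*c2 + b3*c3 = 0"
    using assms by (auto simp: dot3_def a b c)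
  have x1: "c2 * (a1*b2 - a2*b1) - c3 * (a3*b1 - a1*b3) = a1 * (b1*c1 + b2*c2 + b3*c3) - b1 * (a1*c1 + a2*c2 + a3*c3)"
    by (simp add: algebra_simps)
  have x2: "c3 * (a2*b3 - a3*b2) - c1 * (a1*b2 - a2*b1) = a2 * (b1*c1 + b2*c2 + b3*c3) - b2 * (a1*c1 + a2*c2 + a3*c3)"
    by (simp add: algebra_simps)
  have x3: "c1 * (a3*b1 - a1*b3) - c2 * (a2*b3 - a3*b2) = a3 * (b1*c1 + b2*c2 + b3*c3) - b3 * (a1*c1 + a2*c2 + a3*c3)"
    by (simp add: algebra_simps)
  show ?thesis using x1 x2 x3 h1 h2 by (simp add: cross3_def a b c)
qed

lemma scale3_zero: "scale3 c (v::'a::field vec3) = (0,0,0) \<longleftrightarrow> c = 0 \<or> v = (0,0,0)"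
  by (cases v) (auto simp: scale3_def)

lemma scale3_scale3: "scale3 c (scale3 c' v) = scale3 (c*c') v"
  by (simp add: scale3_def mult.assoc)

lemma scale3_one: "scale3 1 v = v"
  by (simp add: scale3_def)

lemma pclass_scale: "(k::'a::field) \<noteq> 0 \<Longrightarrow> pclass (scale3 k v) = pclass v"
proof -
  assume k: "k \<noteq> 0"
  show ?thesis
    unfolding pclass_def
  proof (intro set_eqI iffI)
    fix x assume "x \<in> {scale3 c (scale3 k v) |c. c \<noteq> 0}"
    then obtain c where "c \<noteq> 0" "x = scale3 c (scale3 k v)" by auto
    then show "x \<in> {scale3 c v |c. c \<noteq> 0}" using k by (auto simp: scale3_scale3)
  next
    fix x assume "x \<in> {scale3 c v |c. c \<noteq> 0}"
    then obtain c where "c \<noteq> 0" "x = scale3 c v" by auto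
    then have "x = scale3 (c/k) (scale3 k v)" using k by (simp add: scale3_scale3)
    then show "x \<in> {scale3 c (scale3 k v) |c. c \<noteq> 0}" using k \<open>c\<noteq>0\<close> by auto
  qed
qed

lemma dot3_scale: "dot3 (scale3 c v) (scale3 c' w) = c * c' * dot3 v w"
  by (simp add: dot3_def scale3_def algebra_simps)

lemma incident_pclass: "incident (pclass v) (pclass w) \<Longrightarrow> dot3 v (w::'a::field vec3) = 0"
  unfolding incident_def pclass_def by (auto simp: dot3_scale)

lemma two_points_one_line:
  fixes v v' w w' :: "'a::field vec3"
  assumes "v \<noteq> (0,0,0)" "v' \<noteq> (0,0,0)" "w \<noteq> (0,0,0)" "w' \<noteq> (0,0,0)"
    and "pclass v \<noteq> pclass v'"
    and "dot3 v w = 0" "dot3 v' w = 0" "dot3 v w' = 0" "dot3 v' w' = 0"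
  shows "pclass w = pclass w'"
proof -
  have n: "cross3 v v' \<noteq> (0,0,0)"
  proof
    assume "cross3 v v' = (0,0,0)"
    then obtain c where c: "v' = scale3 c v" using cross_zero_prop assms(1) by blast
    then have "c \<noteq> 0" using assms(2) by (auto simp: scale3_zero)
    then show False using assms(5) c pclass_scale by metis
  qed
  obtain c1 where c1: "cross3 v v' = scale3 c1 w"
    using cross_zero_prop[OF assms(3) cross_orth[OF assms(6,7)]] by blast
  obtain c2 where c2: "cross3 v v' = scale3 c2 w'"
    using cross_zero_prop[OF assms(4) cross_orth[OF assms(8,9)]] by blast
  have "c1 \<noteq> 0" using n c1 by (auto simp: scale3_zero)
  have "c2 \<noteq> 0" using n c2 by (auto simp: scale3_zero)
  have "scale3 (1/c1) (scale3 c1 w) = scale3 (1/c1) (scale3 c2 w')" using c1 c2 by simp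
  then have "w = scale3 (c2/c1) w'" using \<open>c1 \<noteq> 0\<close> by (simp add: scale3_scale3 scale3_one)
  moreover have "c2/c1 \<noteq> 0" using \<open>c1 \<noteq> 0\<close> \<open>c2 \<noteq> 0\<close> by simp
  ultimately show ?thesis using pclass_scale by metis
qed

lemma bonferroni:
  fixes A :: "nat \<Rightarrow> 'b set"
  assumes "\<And>i. i < r \<Longrightarrow> finite (A i)"
    and "\<And>i j. i < r \<Longrightarrow> j < r \<Longrightarrow> i \<noteq> j \<Longrightarrow> card (A i \<inter> A j) \<le> 1"
  shows "(\<Sum>i<r. card (A i)) \<le> card (\<Union>i<r. A i) + (r choose 2)"
  using assms
proof (induction r)
  case 0
  then show ?case by simp
next
  case (Suc r)
  have IH: "(\<Sum>i<r. card (A i)) \<le> card (\<Union>i<r. A i) + (r choose 2)"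
  proof (rule Suc.IH)
    fix i assume "i < r" then show "finite (A i)" using Suc.prems(1) by simp
  next
    fix i j assume "i < r" "j < r" "i \<noteq> j"
    then show "card (A i \<inter> A j) \<le> 1" using Suc.prems(2)[of i j] by simp
  qed
  have fU: "finite (\<Union>i<r. A i)" using Suc.prems(1) by auto
  have fA: "finite (A r)" using Suc.prems(1) by auto
  have e: "A r \<inter> (\<Union>i<r. A i) = (\<Union>i<r. A r \<inter> A i)" by blast
  have "card (\<Union>i<r. A r \<inter> A i) \<le> (\<Sum>i<r. card (A r \<inter> A i))"
    by (rule card_UN_le) simp
  also have "\<dots> \<le> (\<Sum>i<r. 1)"
  proof (rule sum_mono)
    fix i assume "i \<in> {..<r}"
    then have "r < Suc r" "i < Suc r" "r \<noteq> i" by auto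
    then show "card (A r \<inter> A i) \<le> 1" by (rule Suc.prems(2))
  qed
  finally have I0: "card (\<Union>i<r. A r \<inter> A i) \<le> r" by simp
  have I: "card (A r \<inter> (\<Union>i<r. A i)) \<le> r" unfolding e by (rule I0)
  have U: "(\<Union>i<Suc r. A i) = A r \<union> (\<Union>i<r. A i)" by (auto simp: lessThan_Suc)
  have CU: "card (A r \<union> (\<Union>i<r. A i)) + card (A r \<inter> (\<Union>i<r. A i)) = card (A r) + card (\<Union>i<r. A i)"
    by (rule card_Un_Int[OF fA fU, symmetric])
  have S: "(\<Sum>i<Suc r. card (A i)) = (\<Sum>i<r. card (A i)) + card (A r)" by simp
  have C: "(Suc r choose 2) = (r choose 2) + r" by (simp add: numeral_2_eq_2)
  show ?case unfolding S C U using IH I CU by linarith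
qed

theorem lemma2:
  fixes Ls :: "'a::field vec3 set set"
    and P :: "nat \<Rightarrow> 'a vec3 set"
    and d s :: nat
  assumes "Ls \<subseteq> proj_lines" and "finite Ls" and "card Ls = d"
    and "card (singular_points Ls) = s"
    and "bij_betw P {0..<s} (singular_points Ls)"
    and "\<And>i j. i \<le> j \<Longrightarrow> j < s \<Longrightarrow> mult Ls (P j) \<le> mult Ls (P i)"
  shows "(\<forall>r\<in>{1..s}. (\<Sum>i<r. mult Ls (P i)) \<le> d + (r choose 2))
     \<and> (s \<ge> 3 \<longrightarrow> mult Ls (P 0) + mult Ls (P 1) + mult Ls (P 2) \<le> d + 3)
     \<and> (s \<ge> 4 \<longrightarrow> mult Ls (P 0) + mult Ls (P 1) + mult Ls (P 2) + mult Ls (P 3) \<le> d + 6)"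
proof -
  define A where "A i = {L \<in> Ls. incident (P i) L}" for i
  have pts: "\<And>i. i < s \<Longrightarrow> P i \<in> proj_points"
    using assms(5) unfolding bij_betw_def singular_points_def by auto
  have inj: "\<And>i j. i < s \<Longrightarrow> j < s \<Longrightarrow> i \<noteq> j \<Longrightarrow> P i \<noteq> P j"
    using assms(5) unfolding bij_betw_def inj_on_def by auto
  have inter: "card (A i \<inter> A j) \<le> 1" if ij: "i < s" "j < s" "i \<noteq> j" for i j
  proof -
    have "finite (A i \<inter> A j)" using assms(2) by (auto simp: A_def)
    moreover have "\<forall>L\<in>A i \<inter> A j. \<forall>L'\<in>A i \<inter> A j. L = L'"
    proof (intro ballI)
      fix L L' assume L: "L \<in> A i \<inter> A j" and L': "L' \<in> A i \<inter> A j"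
      obtain v where v: "v \<noteq> (0,0,0)" "P i = pclass v" using pts[OF ij(1)] unfolding proj_points_def by blast
      obtain v' where v': "v' \<noteq> (0,0,0)" "P j = pclass v'" using pts[OF ij(2)] unfolding proj_points_def by blast
      have "L \<in> proj_lines" "L' \<in> proj_lines" using L L' assms(1) by (auto simp: A_def)
      then obtain w where w: "w \<noteq> (0,0,0)" "L = pclass w" unfolding proj_lines_def by blast
      obtain w' where w': "w' \<noteq> (0,0,0)" "L' = pclass w'"
        using \<open>L' \<in> proj_lines\<close> unfolding proj_lines_def by blast
      have i1: "incident (pclass v) (pclass w)" "incident (pclass v') (pclass w)"
        "incident (pclass v) (pclass w')" "incident (pclass v') (pclass w')"
        using L L' v(2) v'(2) w(2) w'(2) unfolding A_def by auto
      have "pclass v \<noteq> pclass v'" using inj[OF ij] v(2) v'(2) by simp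
      then have "pclass w = pclass w'"
        by (rule two_points_one_line[OF v(1) v'(1) w(1) w'(1)])
          (use i1 in \<open>simp_all add: incident_pclass\<close>)
      then show "L = L'" using w(2) w'(2) by simp
    qed
    ultimately show ?thesis by (simp add: card_le_Suc0_iff_eq)
  qed
  have main: "(\<Sum>i<r. mult Ls (P i)) \<le> d + (r choose 2)" if "r \<le> s" for r
  proof -
    have fin: "finite (A i)" for i using assms(2) unfolding A_def by simp
    have "(\<Sum>i<r. card (A i)) \<le> card (\<Union>i<r. A i) + (r choose 2)"
    proof (rule bonferroni)
      fix i j assume "i < r" "j < r" "i \<noteq> j"
      then show "card (A i \<inter> A j) \<le> 1" using inter that by simp
    qed (rule fin)
    moreover have "(\<Union>i<r. A i) \<subseteq> Ls" unfolding A_def by blast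
    then have "card (\<Union>i<r. A i) \<le> d"
      using assms(2,3) card_mono by metis
    ultimately show ?thesis by (simp add: A_def mult_def)
  qed
  have c3: "(3::nat) choose 2 = 3" and c4: "(4::nat) choose 2 = 6"
    by (simp_all add: choose_two)
  have s3: "(\<Sum>i<3. f i) = f 0 + f 1 + f (2::nat)" for f :: "nat \<Rightarrow> nat"
    by (simp add: numeral_3_eq_3 lessThan_Suc numeral_2_eq_2)
  have s4: "(\<Sum>i<4. f i) = f 0 + f 1 + f 2 + f (3::nat)" for f :: "nat \<Rightarrow> nat"
    by (simp add: lessThan_Suc eval_nat_numeral)
  have A1: "\<forall>r\<in>{1..s}. (\<Sum>i<r. mult Ls (P i)) \<le> d + (r choose 2)"
    using main by simp
  have A2: "s \<ge> 3 \<longrightarrow> mult Ls (P 0) + mult Ls (P 1) + mult Ls (P 2) \<le> d + 3"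
  proof
    assume "s \<ge> 3"
    from main[OF this] show "mult Ls (P 0) + mult Ls (P 1) + mult Ls (P 2) \<le> d + 3"
      unfolding c3 s3[of "\<lambda>i. mult Ls (P i)"] .
  qed
  have A3: "s \<ge> 4 \<longrightarrow> mult Ls (P 0) + mult Ls (P 1) + mult Ls (P 2) + mult Ls (P 3) \<le> d + 6"
  proof
    assume "s \<ge> 4"
    from main[OF this] show "mult Ls (P 0) + mult Ls (P 1) + mult Ls (P 2) + mult Ls (P 3) \<le> d + 6"
      unfolding c4 s4[of "\<lambda>i. mult Ls (P i)"] .
  qed
  show ?thesis using A1 A2 A3 by (intro conjI)
qed

end
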